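(* Let $(\Omega,\mathcal F,\mathbb P_0)$ be a probability space carrying a two-dimensional Brownian motion $W=(W^1,W^2)$, let $\mathbb F^W$ be its $\mathbb P_0$-augmented natural filtration, and for $i=0,1$ let $\mathcal A^i_{\rm S}$ be the set of $\mathbb F^W$-progressively measurable processes with values in $[-1,1]$. Fix constants $c\in\mathbb R$ and $\rho\in[-1,1]$. For $\alpha=(\alpha^0,\alpha^1)\in\mathcal A^0_{\rm S}\times\mathcal A^1_{\rm S}$ put $$X^{1,\alpha}_t:=\int_0^t\alpha^0_s\,ds+cW^1_t,\qquad X^{2,\alpha}_t:=\int_0^t\alpha^1_s\,ds+c\big(\rho W^1_t+\sqrt{1-\rho^2}\,W^2_t\big),\qquad J_{\rm S}(\alpha):=\mathbb E^{\mathbb P_0}\big[|X^{1,\alpha}_T-X^{2,\alpha}_T|^2\big],$$ and define $\overline V^{\rm S}_0:=\inf_{\alpha^0\in\mathcal A^0_{\rm S}}\sup_{\alpha^1\in\mathcal A^1_{\rm S}}J_{\rm S}(\alpha^0,\alpha^1)$ and $\underline V^{\rm S}_0:=\sup_{\alpha^1\in\mathcal A^1_{\rm S}}\inf_{\alpha^0\in\mathcal A^0_{\rm S}}J_{\rm S}(\alpha^0,\alpha^1)$. Then $$\underline V^{\rm S}_0\le 2(1-\rho)c^2T\qquad\text{and}\qquad T^2\le\overline V^{\rm S}_0 .$$ In particular $\underline V^{\rm S}_0<\overline V^{\rm S}_0$ whenever $2(1-\rho)c^2<T$.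
   Context: This is the "strong formulation with control against control" of a zero-sum game with fixed time horizon $T>0$, drift $b(t,x,a)=(a_0,a_1)^\top$, constant volatility $\begin{pmatrix}c&0\\ c\rho& c\sqrt{1-\rho^2}\end{pmatrix}$, running cost $0$ and terminal cost $g(x)=|x_1-x_2|^2$. *)

theory Defs
  imports "HOL-Probability.Probability"
begin

definition rv_sigma :: "'a measure \<Rightarrow> ('a \<Rightarrow> real) \<Rightarrow> 'a set set" where
  "rv_sigma M X = {X -` A \<inter> space M | A. A \<in> sets borel}"

definition nat_filt :: "'a measure \<Rightarrow> (real \<Rightarrow> 'a \<Rightarrow> real) \<Rightarrow> (real \<Rightarrow> 'a \<Rightarrow> real) \<Rightarrow> real \<Rightarrow> 'a set set" where
  "nat_filt M W1 W2 t = sigma_sets (space M) (\<Union>u\<in>{0..t}. rv_sigma M (W1 u) \<union> rv_sigma M (W2 u))"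

text \<open>P-augmentation by the P-null sets of F (= sets M): sigma(F_t \<union> N)
  which equals the sets A in F differing from some B in F_t by a null set\<close>
definition aug_filt :: "'a measure \<Rightarrow> (real \<Rightarrow> 'a \<Rightarrow> real) \<Rightarrow> (real \<Rightarrow> 'a \<Rightarrow> real) \<Rightarrow> real \<Rightarrow> 'a measure" where
  "aug_filt M W1 W2 t = sigma (space M)
     (sigma_sets (space M) (nat_filt M W1 W2 t \<union> null_sets M))"

definition brownian_motion_2d :: "'a measure \<Rightarrow> (real \<Rightarrow> 'a \<Rightarrow> real) \<Rightarrow> (real \<Rightarrow> 'a \<Rightarrow> real) \<Rightarrow> bool" where
  "brownian_motion_2d M W1 W2 \<longleftrightarrow>
     prob_space M \<and>
     (\<forall>t. W1 t \<in> borel_measurable M \<and> W2 t \<in> borel_measurable M) \<and>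
     (AE \<omega> in M. W1 0 \<omega> = 0 \<and> W2 0 \<omega> = 0 \<and>
        continuous_on {0..} (\<lambda>t. W1 t \<omega>) \<and> continuous_on {0..} (\<lambda>t. W2 t \<omega>)) \<and>
     (\<forall>s t. 0 \<le> s \<longrightarrow> s < t \<longrightarrow>
        distributed M lborel (\<lambda>\<omega>. W1 t \<omega> - W1 s \<omega>) (normal_density 0 (sqrt (t - s))) \<and>
        distributed M lborel (\<lambda>\<omega>. W2 t \<omega> - W2 s \<omega>) (normal_density 0 (sqrt (t - s))) \<and>
        prob_space.indep_sets M
          (\<lambda>i::nat. if i = 0 then nat_filt M W1 W2 s
                    else if i = 1 then rv_sigma M (\<lambda>\<omega>. W1 t \<omega> - W1 s \<omega>)
                    else rv_sigma M (\<lambda>\<omega>. W2 t \<omega> - W2 s \<omega>)) {0, 1, 2})"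

definition strong_controls :: "'a measure \<Rightarrow> (real \<Rightarrow> 'a \<Rightarrow> real) \<Rightarrow> (real \<Rightarrow> 'a \<Rightarrow> real) \<Rightarrow> real \<Rightarrow> (real \<Rightarrow> 'a \<Rightarrow> real) set" where
  "strong_controls M W1 W2 T =
     {\<alpha>. (\<forall>t\<in>{0..T}. (\<lambda>(s, \<omega>). \<alpha> s \<omega>) \<in>
             borel_measurable (restrict_space borel {0..t} \<Otimes>\<^sub>M aug_filt M W1 W2 t)) \<and>
         (\<forall>s\<in>{0..T}. \<forall>\<omega>\<in>space M. \<alpha> s \<omega> \<in> {-1..1})}"

definition X1 :: "real \<Rightarrow> (real \<Rightarrow> 'a \<Rightarrow> real) \<Rightarrow> (real \<Rightarrow> 'a \<Rightarrow> real) \<Rightarrow> real \<Rightarrow> 'a \<Rightarrow> real" where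
  "X1 c W1 a0 t \<omega> = (\<integral>s\<in>{0..t}. a0 s \<omega> \<partial>lborel) + c * W1 t \<omega>"

definition X2 :: "real \<Rightarrow> real \<Rightarrow> (real \<Rightarrow> 'a \<Rightarrow> real) \<Rightarrow> (real \<Rightarrow> 'a \<Rightarrow> real) \<Rightarrow> (real \<Rightarrow> 'a \<Rightarrow> real) \<Rightarrow> real \<Rightarrow> 'a \<Rightarrow> real" where
  "X2 c \<rho> W1 W2 a1 t \<omega> = (\<integral>s\<in>{0..t}. a1 s \<omega> \<partial>lborel)
      + c * (\<rho> * W1 t \<omega> + sqrt (1 - \<rho>\<^sup>2) * W2 t \<omega>)"

definition J_S :: "'a measure \<Rightarrow> real \<Rightarrow> real \<Rightarrow> real \<Rightarrow> (real \<Rightarrow> 'a \<Rightarrow> real) \<Rightarrow> (real \<Rightarrow> 'a \<Rightarrow> real)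
    \<Rightarrow> (real \<Rightarrow> 'a \<Rightarrow> real) \<Rightarrow> (real \<Rightarrow> 'a \<Rightarrow> real) \<Rightarrow> real" where
  "J_S M c \<rho> T W1 W2 a0 a1 =
     (\<integral>\<omega>. \<bar>X1 c W1 a0 T \<omega> - X2 c \<rho> W1 W2 a1 T \<omega>\<bar>\<^sup>2 \<partial>M)"

definition upper_value_S where
  "upper_value_S M c \<rho> T W1 W2 =
     (INF a0\<in>strong_controls M W1 W2 T. SUP a1\<in>strong_controls M W1 W2 T. J_S M c \<rho> T W1 W2 a0 a1)"

definition lower_value_S where
  "lower_value_S M c \<rho> T W1 W2 =
     (SUP a1\<in>strong_controls M W1 W2 T. INF a0\<in>strong_controls M W1 W2 T. J_S M c \<rho> T W1 W2 a0 a1)"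

end

theory Submission
  imports Defs
begin


lemma aug_sub:
  assumes "\<And>t. W1 t \<in> borel_measurable M" "\<And>t. W2 t \<in> borel_measurable M"
  shows "id \<in> measurable M (aug_filt M W1 W2 t)"
proof -
  have rv: "rv_sigma M (X t) \<subseteq> sets M" if "\<And>t. X t \<in> borel_measurable M" for X :: "real \<Rightarrow> _" and t
    using that unfolding rv_sigma_def by (auto intro: measurable_sets)
  have "nat_filt M W1 W2 t \<subseteq> sets M"
    unfolding nat_filt_def using rv[of W1] rv[of W2] assms
    by (intro sets.sigma_sets_subset) auto
  then have G: "sigma_sets (space M) (nat_filt M W1 W2 t \<union> null_sets M) \<subseteq> sets M"
    by (intro sets.sigma_sets_subset) auto
  show ?thesis unfolding aug_filt_def
    apply (rule measurable_measure_of)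
    using G sets.sets_into_space by (auto simp: vimage_def)
qed

lemma ctrl_meas:
  assumes "\<And>t. W1 t \<in> borel_measurable M" "\<And>t. W2 t \<in> borel_measurable M"
    and a: "a \<in> strong_controls M W1 W2 T" and T: "T \<ge> 0"
  shows "(\<lambda>\<omega>. \<integral>s\<in>{0..T}. a s \<omega> \<partial>lborel) \<in> borel_measurable M"
proof -
  have h: "(\<lambda>(s, \<omega>). a s \<omega>) \<in> borel_measurable (restrict_space borel {0..T} \<Otimes>\<^sub>M aug_filt M W1 W2 T)"
    using a T unfolding strong_controls_def by auto
  have idm: "(\<lambda>x. x) \<in> measurable (restrict_space lborel {0..T} \<Otimes>\<^sub>M M) (restrict_space borel {0..T} \<Otimes>\<^sub>M aug_filt M W1 W2 T)"
  proof (rule measurable_Pair[where f=fst and g=snd, simplified])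
    show "fst \<in> measurable (restrict_space lborel {0..T} \<Otimes>\<^sub>M M) (restrict_space borel {0..T})"
      using measurable_fst[of "restrict_space lborel {0..T}" M]
      by (simp add: measurable_cong_sets sets_restrict_space)
    show "snd \<in> measurable (restrict_space lborel {0..T} \<Otimes>\<^sub>M M) (aug_filt M W1 W2 T)"
      using measurable_comp[OF measurable_snd aug_sub[OF assms(1,2)]] by (simp add: comp_def id_def)
  qed
  have h2: "(\<lambda>(s, \<omega>). a s \<omega>) \<in> borel_measurable (restrict_space lborel {0..T} \<Otimes>\<^sub>M M)"
    using measurable_comp[OF idm h] by (simp add: comp_def)
  have h3: "(\<lambda>(\<omega>, s). a s \<omega>) \<in> borel_measurable (M \<Otimes>\<^sub>M restrict_space lborel {0..T})"
    using measurable_comp[OF measurable_pair_swap' h2] by (simp add: comp_def case_prod_beta)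
  interpret R: finite_measure "restrict_space lborel {0..T}"
    by (intro finite_measureI) (simp add: emeasure_restrict_space T)
  have "(\<lambda>\<omega>. \<integral>s. a s \<omega> \<partial>restrict_space lborel {0..T}) \<in> borel_measurable M"
    by (rule R.borel_measurable_lebesgue_integral) (use h3 in simp)
  moreover have "(\<integral>s. a s \<omega> \<partial>restrict_space lborel {0..T}) = (\<integral>s\<in>{0..T}. a s \<omega> \<partial>lborel)" for \<omega>
    by (simp add: integral_restrict_space set_lebesgue_integral_def)
  ultimately show ?thesis by simp
qed



lemma int_bound:
  assumes "\<forall>s\<in>{0..T}. a s \<in> {-1..1::real}" "T \<ge> 0"
  shows "\<bar>\<integral>s\<in>{0..T}. a s \<partial>lborel\<bar> \<le> T"
proof (cases "integrable lborel (\<lambda>s. indicator {0..T} s *\<^sub>R a s)")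
  case True
  have "\<bar>\<integral>s. indicator {0..T} s *\<^sub>R a s \<partial>lborel\<bar> \<le> (\<integral>s. norm (indicator {0..T} s *\<^sub>R a s) \<partial>lborel)"
    using integral_norm_bound[of lborel "\<lambda>s. indicator {0..T} s *\<^sub>R a s"] by simp
  also have "\<dots> \<le> (\<integral>s. indicator {0..T} s \<partial>lborel)"
  proof (rule integral_mono)
    show "integrable lborel (indicator {0..T} :: real \<Rightarrow> real)"
      using integrable_indicator[of "{0..T}" lborel "1::real"] assms(2) by simp
  qed (use True assms(1) in \<open>auto simp: indicator_def abs_le_iff\<close>)
  also have "\<dots> = T" using assms(2) by simp
  finally show ?thesis by (simp add: set_lebesgue_integral_def)
next
  case False
  then show ?thesis using assms(2) by (simp add: set_lebesgue_integral_def not_integrable_integral_eq)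
qed

lemma int_const: "T \<ge> 0 \<Longrightarrow> (\<integral>s\<in>{0..T}. (k::real) \<partial>lborel) = k * T"
  by (subst set_integral_const) auto

lemma const_ctrl: "k \<in> {-1..1} \<Longrightarrow> (\<lambda>s \<omega>. k) \<in> strong_controls M W1 W2 T"
  unfolding strong_controls_def by auto



lemma (in prob_space) normal_sq:
  assumes D: "distributed M lborel X (normal_density 0 (sqrt T))" and T: "T > 0"
  shows "integrable M X" "integrable M (\<lambda>\<omega>. (X \<omega>)\<^sup>2)" "expectation X = 0"
    "expectation (\<lambda>\<omega>. (X \<omega>)\<^sup>2) = T"
proof -
  have s: "0 < sqrt T" using T by simp
  show "integrable M X"
    using distributed_integrable_var[OF D] integrable_normal_moment_nz_1[OF s] by simp
  show "integrable M (\<lambda>\<omega>. (X \<omega>)\<^sup>2)"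
  proof -
    have "integrable lborel (\<lambda>x. normal_density 0 (sqrt T) x * (x - 0)^2)"
      by (rule integrable_normal_moment[OF s])
    then have "integrable lborel (\<lambda>x. normal_density 0 (sqrt T) x * x\<^sup>2)" by simp
    then show ?thesis using distributed_integrable[OF D, of "\<lambda>x. x\<^sup>2"] by simp
  qed
  show e: "expectation X = 0" using normal_distributed_expectation[OF s D] .
  show "expectation (\<lambda>\<omega>. (X \<omega>)\<^sup>2) = T"
    using normal_distributed_variance[OF s D] e T by simp
qed

lemma (in prob_space) indep_rv:
  assumes I: "indep_sets F {0,1,2::nat}" and F1: "F 1 = rv_sigma M X" and F2: "F 2 = rv_sigma M Y"
    and X: "X \<in> borel_measurable M" and Y: "Y \<in> borel_measurable M"
  shows "indep_var borel X borel Y"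
proof -
  have eq: "sigma_sets (space M) {Z -` A \<inter> space M | A. A \<in> sets borel} = rv_sigma M Z" for Z :: "'a \<Rightarrow> real"
    using sets_vimage_algebra[of "space M" Z borel] sets_vimage_algebra2[of Z "space M" borel]
    unfolding rv_sigma_def by simp
  have ev: "rv_sigma M Z \<subseteq> events" if "Z \<in> borel_measurable M" for Z :: "'a \<Rightarrow> real"
    using that unfolding rv_sigma_def by (auto intro: measurable_sets)
  have "indep_set (rv_sigma M X) (rv_sigma M Y)"
    unfolding indep_sets2_eq
  proof (intro conjI ballI ev X Y)
    fix a b assume a: "a \<in> rv_sigma M X" and b: "b \<in> rv_sigma M Y"
    have "prob (\<Inter>j\<in>{1,2::nat}. (\<lambda>i. if i = 1 then a else b) j) = (\<Prod>j\<in>{1,2::nat}. prob ((\<lambda>i. if i = 1 then a else b) j))"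
      by (rule indep_setsD[OF I]) (use a b F1 F2 in auto)
    then show "prob (a \<inter> b) = prob a * prob b" by (simp add: Int_commute)
  qed
  then show ?thesis
    unfolding indep_var_eq eq using X Y by simp
qed


lemma pt_lemma:
  fixes u v z T :: real
  assumes "\<bar>u\<bar> \<le> T" "\<bar>v\<bar> \<le> T"
  shows "(u - v + z)\<^sup>2 \<le> 8 * T\<^sup>2 + 2 * z\<^sup>2"
proof -
  have a: "(u - v + z)\<^sup>2 \<le> 2 * (u - v)\<^sup>2 + 2 * z\<^sup>2"
  proof -
    have "0 \<le> (u - v - z)\<^sup>2" by simp
    moreover have "2 * (u - v)\<^sup>2 + 2 * z\<^sup>2 - (u - v + z)\<^sup>2 = (u - v - z)\<^sup>2"
      by (simp add: power2_eq_square algebra_simps)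
    ultimately show ?thesis by linarith
  qed
  have "\<bar>u - v\<bar> \<le> 2 * T" using assms by linarith
  then have "\<bar>u - v\<bar>\<^sup>2 \<le> (2 * T)\<^sup>2" by (intro power_mono) auto
  then have b: "(u - v)\<^sup>2 \<le> 4 * T\<^sup>2" by (simp add: power_mult_distrib)
  show ?thesis using a b by linarith
qed

theorem mainTheorem1:
  fixes M :: "'a measure" and W1 W2 :: "real \<Rightarrow> 'a \<Rightarrow> real" and c \<rho> T :: real
  assumes "brownian_motion_2d M W1 W2"
    and "T > 0"
    and "\<rho> \<in> {-1..1}"
  shows "lower_value_S M c \<rho> T W1 W2 \<le> 2 * (1 - \<rho>) * c\<^sup>2 * T
         \<and> T\<^sup>2 \<le> upper_value_S M c \<rho> T W1 W2
         \<and> (2 * (1 - \<rho>) * c\<^sup>2 < T \<longrightarrow> lower_value_S M c \<rho> T W1 W2 < upper_value_S M c \<rho> T W1 W2)"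
proof -
  note BM = assms(1)[unfolded brownian_motion_2d_def]
  interpret P: prob_space M using BM by simp
  have mW1[measurable]: "W1 t \<in> borel_measurable M" for t using BM by simp
  have mW2[measurable]: "W2 t \<in> borel_measurable M" for t using BM by simp
  have AE0: "AE \<omega> in M. W1 0 \<omega> = 0 \<and> W2 0 \<omega> = 0"
    using BM by (auto elim: AE_mp)
  have T: "0 < T" "0 \<le> T" using assms(2) by auto
  define D1 where "D1 = (\<lambda>\<omega>. W1 T \<omega> - W1 0 \<omega>)"
  define D2 where "D2 = (\<lambda>\<omega>. W2 T \<omega> - W2 0 \<omega>)"
  have mD[measurable]: "D1 \<in> borel_measurable M" "D2 \<in> borel_measurable M"
    unfolding D1_def D2_def by auto
  have BMT: "distributed M lborel D1 (normal_density 0 (sqrt T)) \<and>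
        distributed M lborel D2 (normal_density 0 (sqrt T)) \<and>
        P.indep_sets
          (\<lambda>i::nat. if i = 0 then nat_filt M W1 W2 0
                    else if i = 1 then rv_sigma M D1
                    else rv_sigma M D2) {0, 1, 2}"
    using BM T unfolding D1_def D2_def by force
  have ind: "P.indep_var borel D1 borel D2"
    by (rule P.indep_rv[of "\<lambda>i::nat. if i = 0 then nat_filt M W1 W2 0
                    else if i = 1 then rv_sigma M D1 else rv_sigma M D2"]) (use BMT in auto)
  note m1 = P.normal_sq[OF conjunct1[OF BMT] T(1)]
  note m2 = P.normal_sq[OF conjunct1[OF conjunct2[OF BMT]] T(1)]
  have E12: "P.expectation (\<lambda>\<omega>. D1 \<omega> * D2 \<omega>) = 0"
    using P.indep_var_lebesgue_integral[OF ind m1(1) m2(1)] m1(3) by simp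
  have I12: "integrable M (\<lambda>\<omega>. D1 \<omega> * D2 \<omega>)"
    using P.indep_var_integrable[OF ind m1(1) m2(1)] .
  define s where "s = sqrt (1 - \<rho>\<^sup>2)"
  have s2: "s\<^sup>2 = 1 - \<rho>\<^sup>2" unfolding s_def using assms(3)
    by (simp add: abs_square_le_1 abs_le_iff)
  define Z where "Z = (\<lambda>\<omega>. c * W1 T \<omega> - c * (\<rho> * W1 T \<omega> + s * W2 T \<omega>))"
  have mZ[measurable]: "Z \<in> borel_measurable M" unfolding Z_def by measurable
  define Q where "Q = (\<lambda>\<omega>. (c\<^sup>2 * (1-\<rho>)\<^sup>2) * (D1 \<omega>)\<^sup>2 - (2 * c\<^sup>2 * (1-\<rho>) * s) * (D1 \<omega> * D2 \<omega>) + (c\<^sup>2 * s\<^sup>2) * (D2 \<omega>)\<^sup>2)"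
  have mQ[measurable]: "Q \<in> borel_measurable M" unfolding Q_def by measurable
  have ZAE: "AE \<omega> in M. (Z \<omega>)\<^sup>2 = Q \<omega>"
    using AE0 by eventually_elim (simp add: Z_def Q_def D1_def D2_def power2_eq_square algebra_simps)
  have IQ: "integrable M Q" unfolding Q_def using m1 m2 I12 by simp
  have EQ: "(\<integral>\<omega>. Q \<omega> \<partial>M) = 2 * (1 - \<rho>) * c\<^sup>2 * T"
  proof -
    have "(\<integral>\<omega>. Q \<omega> \<partial>M) = c\<^sup>2 * (1-\<rho>)\<^sup>2 * T - 2 * c\<^sup>2 * (1-\<rho>) * s * 0 + c\<^sup>2 * s\<^sup>2 * T"
      unfolding Q_def using m1 m2 I12 E12 by simp
    also have "\<dots> = 2 * (1 - \<rho>) * c\<^sup>2 * T" unfolding s2 by (simp add: power2_eq_square algebra_simps)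
    finally show ?thesis .
  qed
  have IZ: "integrable M (\<lambda>\<omega>. (Z \<omega>)\<^sup>2)"
    using IQ ZAE by (subst integrable_cong_AE[where g=Q]) auto
  have EZ: "(\<integral>\<omega>. (Z \<omega>)\<^sup>2 \<partial>M) = 2 * (1 - \<rho>) * c\<^sup>2 * T"
    using EQ ZAE by (subst integral_cong_AE[where g=Q]) auto
  have Jeq: "J_S M c \<rho> T W1 W2 a0 a1 = (\<integral>\<omega>. ((\<integral>s\<in>{0..T}. a0 s \<omega> \<partial>lborel) - (\<integral>s\<in>{0..T}. a1 s \<omega> \<partial>lborel) + Z \<omega>)\<^sup>2 \<partial>M)"
    for a0 a1
    unfolding J_S_def
  proof (intro Bochner_Integration.integral_cong refl)
    fix \<omega>
    have e: "x + y - (u + v) = x - u + (y - v)" for x y u v :: real by simp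
    show "\<bar>X1 c W1 a0 T \<omega> - X2 c \<rho> W1 W2 a1 T \<omega>\<bar>\<^sup>2 = ((\<integral>s\<in>{0..T}. a0 s \<omega> \<partial>lborel) - (\<integral>s\<in>{0..T}. a1 s \<omega> \<partial>lborel) + Z \<omega>)\<^sup>2"
      unfolding X1_def X2_def Z_def power2_abs s_def e ..
  qed
  define C where "C = strong_controls M W1 W2 T"
  have cC: "(\<lambda>s \<omega>. k) \<in> C" if "k \<in> {-1..1}" for k
    unfolding C_def using const_ctrl that .
  have Cne: "C \<noteq> {}" using cC[of 0] by auto
  have bndA: "\<bar>\<integral>s\<in>{0..T}. a s \<omega> \<partial>lborel\<bar> \<le> T" if "a \<in> C" "\<omega> \<in> space M" for a \<omega>
    using that T(2) by (intro int_bound) (auto simp: C_def strong_controls_def)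
  have Jnn: "0 \<le> J_S M c \<rho> T W1 W2 a0 a1" for a0 a1
    unfolding J_S_def by simp
  define K where "K = (\<integral>\<omega>. 8 * T\<^sup>2 + 2 * (Z \<omega>)\<^sup>2 \<partial>M)"
  have IK: "integrable M (\<lambda>\<omega>. 8 * T\<^sup>2 + 2 * (Z \<omega>)\<^sup>2)" using IZ by simp
  have pt: "(u - v + z)\<^sup>2 \<le> 8 * T\<^sup>2 + 2 * z\<^sup>2" if "\<bar>u\<bar> \<le> T" "\<bar>v\<bar> \<le> T" for u v z :: real
    using pt_lemma[OF that] .
  have JK: "J_S M c \<rho> T W1 W2 a0 a1 \<le> K" if "a0 \<in> C" "a1 \<in> C" for a0 a1
  proof (cases "integrable M (\<lambda>\<omega>. ((\<integral>s\<in>{0..T}. a0 s \<omega> \<partial>lborel) - (\<integral>s\<in>{0..T}. a1 s \<omega> \<partial>lborel) + Z \<omega>)\<^sup>2)")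
    case True
    show ?thesis unfolding Jeq K_def
      by (rule integral_mono[OF True IK]) (intro pt bndA that; assumption)
  next
    case False
    have "0 \<le> K" unfolding K_def by (intro integral_nonneg_AE) auto
    then show ?thesis unfolding Jeq using False by (simp add: not_integrable_integral_eq)
  qed
  have low: "lower_value_S M c \<rho> T W1 W2 \<le> 2 * (1 - \<rho>) * c\<^sup>2 * T"
    unfolding lower_value_S_def C_def[symmetric]
  proof (rule cSUP_least[OF Cne])
    fix a1 assume a1: "a1 \<in> C"
    have "(INF a0\<in>C. J_S M c \<rho> T W1 W2 a0 a1) \<le> J_S M c \<rho> T W1 W2 a1 a1"
      by (rule cINF_lower[OF _ a1]) (auto intro: bdd_belowI2[where m=0] Jnn)
    also have "J_S M c \<rho> T W1 W2 a1 a1 = 2 * (1 - \<rho>) * c\<^sup>2 * T"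
      unfolding Jeq using EZ by simp
    finally show "(INF a0\<in>C. J_S M c \<rho> T W1 W2 a0 a1) \<le> 2 * (1 - \<rho>) * c\<^sup>2 * T" .
  qed
  have up: "T\<^sup>2 \<le> upper_value_S M c \<rho> T W1 W2"
    unfolding upper_value_S_def C_def[symmetric]
  proof (rule cINF_greatest[OF Cne])
    fix a0 assume a0: "a0 \<in> C"
    define A where "A = (\<lambda>\<omega>. \<integral>s\<in>{0..T}. a0 s \<omega> \<partial>lborel)"
    have mA[measurable]: "A \<in> borel_measurable M"
      unfolding A_def using ctrl_meas[OF mW1 mW2 a0[unfolded C_def] T(2)] .
    have Jk: "J_S M c \<rho> T W1 W2 a0 (\<lambda>s \<omega>. k) = (\<integral>\<omega>. (A \<omega> - k * T + Z \<omega>)\<^sup>2 \<partial>M)" for k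
      unfolding Jeq A_def using int_const[OF T(2), of k] by simp
    have Ik: "integrable M (\<lambda>\<omega>. (A \<omega> - k * T + Z \<omega>)\<^sup>2)" if "k \<in> {-1..1}" for k
    proof (rule Bochner_Integration.integrable_bound[OF IK])
      show "AE \<omega> in M. norm ((A \<omega> - k * T + Z \<omega>)\<^sup>2) \<le> norm (8 * T\<^sup>2 + 2 * (Z \<omega>)\<^sup>2)"
      proof (rule AE_I2)
        fix \<omega> assume "\<omega> \<in> space M"
        then have "\<bar>A \<omega>\<bar> \<le> T" unfolding A_def using bndA a0 by blast
        moreover have "\<bar>k * T\<bar> \<le> T" using that T by (auto simp: abs_mult intro: mult_left_le_one_le)
        ultimately have "(A \<omega> - k * T + Z \<omega>)\<^sup>2 \<le> 8 * T\<^sup>2 + 2 * (Z \<omega>)\<^sup>2" by (rule pt)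
        then show "norm ((A \<omega> - k * T + Z \<omega>)\<^sup>2) \<le> norm (8 * T\<^sup>2 + 2 * (Z \<omega>)\<^sup>2)" by simp
      qed
    qed measurable
    have "2 * T\<^sup>2 \<le> (\<integral>\<omega>. (A \<omega> - 1 * T + Z \<omega>)\<^sup>2 + (A \<omega> - (-1) * T + Z \<omega>)\<^sup>2 \<partial>M)"
    proof -
      have "(\<integral>\<omega>. 2 * T\<^sup>2 \<partial>M) \<le> (\<integral>\<omega>. (A \<omega> - 1 * T + Z \<omega>)\<^sup>2 + (A \<omega> - (-1) * T + Z \<omega>)\<^sup>2 \<partial>M)"
      proof (rule integral_mono)
        show "integrable M (\<lambda>\<omega>. (A \<omega> - 1 * T + Z \<omega>)\<^sup>2 + (A \<omega> - (-1) * T + Z \<omega>)\<^sup>2)"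
          by (rule Bochner_Integration.integrable_add) (use Ik[of 1] Ik[of "-1"] in auto)
        fix \<omega>
        have "(A \<omega> - 1 * T + Z \<omega>)\<^sup>2 + (A \<omega> - (-1) * T + Z \<omega>)\<^sup>2 = 2 * (A \<omega> + Z \<omega>)\<^sup>2 + 2 * T\<^sup>2"
          by (simp add: power2_eq_square algebra_simps)
        moreover have "0 \<le> (A \<omega> + Z \<omega>)\<^sup>2" by simp
        ultimately show "2 * T\<^sup>2 \<le> (A \<omega> - 1 * T + Z \<omega>)\<^sup>2 + (A \<omega> - (-1) * T + Z \<omega>)\<^sup>2" by linarith
      qed simp
      then show ?thesis by (simp add: P.prob_space)
    qed
    also have "\<dots> = J_S M c \<rho> T W1 W2 a0 (\<lambda>s \<omega>. 1) + J_S M c \<rho> T W1 W2 a0 (\<lambda>s \<omega>. -1)"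
      unfolding Jk using Ik[of 1] Ik[of "-1"] by (subst Bochner_Integration.integral_add) auto
    finally have sum2: "2 * T\<^sup>2 \<le> J_S M c \<rho> T W1 W2 a0 (\<lambda>s \<omega>. 1) + J_S M c \<rho> T W1 W2 a0 (\<lambda>s \<omega>. -1)" .
    obtain k where k: "k \<in> {-1..1}" "T\<^sup>2 \<le> J_S M c \<rho> T W1 W2 a0 (\<lambda>s \<omega>. k)"
    proof (cases "T\<^sup>2 \<le> J_S M c \<rho> T W1 W2 a0 (\<lambda>s \<omega>. 1)")
      case True
      then show ?thesis using that[of 1] by simp
    next
      case False
      then have "T\<^sup>2 \<le> J_S M c \<rho> T W1 W2 a0 (\<lambda>s \<omega>. -1)" using sum2 by linarith
      then show ?thesis using that[of "-1"] by simp
    qed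
    have "J_S M c \<rho> T W1 W2 a0 (\<lambda>s \<omega>. k) \<le> (SUP a1\<in>C. J_S M c \<rho> T W1 W2 a0 a1)"
      by (rule cSUP_upper[OF cC[OF k(1)]]) (rule bdd_aboveI2[where M=K], rule JK[OF a0])
    with k(2) show "T\<^sup>2 \<le> (SUP a1\<in>C. J_S M c \<rho> T W1 W2 a0 a1)" by simp
  qed
  have "2 * (1 - \<rho>) * c\<^sup>2 < T \<Longrightarrow> 2 * (1 - \<rho>) * c\<^sup>2 * T < T\<^sup>2"
    using T by (simp add: power2_eq_square)
  then show ?thesis using low up by auto
qed

end
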